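(* Let $2\leq d\leq k$ be integers, $\Sigma_k=\{\sigma_1,\ldots,\sigma_k\}$, $\Sigma_d=\{\sigma_1,\ldots,\sigma_d\}$, $n\geq 1$, and let $\mathcal{G}\subseteq\Sigma_k^n$. Put $\mathcal{G}'=\mathcal{G}\cap\Sigma_d^n$. Suppose $\mathcal{G}$ is closed under replacing $\sigma_i$ by $\sigma_j$ for any $i>d$ and $j\in[k]$, i.e. whenever $g\in\mathcal{G}$ has the letter $\sigma_i$ with $i>d$ in some coordinate, the word obtained from $g$ by changing that coordinate to any letter $\sigma_j$, $j\in[k]$, also lies in $\mathcal{G}$. Then either $|\mathcal{G}|=|\mathcal{G}'|=0$ or $\log_k|\mathcal{G}|\leq\log_d|\mathcal{G}'|$. *)

theory Defs
  imports "HOL-Analysis.Analysis"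
begin

text \<open>Letters: sigma_i is represented by the natural number i, so Sigma_k = {1..k}.
  Words of length n over Sigma_k: extensional functions on {..<n}.\<close>

definition words :: "nat \<Rightarrow> nat \<Rightarrow> (nat \<Rightarrow> nat) set" where
  "words k n = PiE {..<n} (\<lambda>_. {1..k})"

end

theory Submission
  imports Defs
begin

lemma superadd_powr:
  fixes x y a :: real
  assumes "0 \<le> x" "0 \<le> y" "1 \<le> a"
  shows "x powr a + y powr a \<le> (x + y) powr a"
proof (cases "x + y = 0")
  case True then have "x = 0" "y = 0" using assms by auto
  then show ?thesis using assms by simp
next
  case False
  then have s: "x + y > 0" using assms by auto
  have h: "z powr a \<le> (x+y) powr a * (z / (x+y))" if "0 \<le> z" "z \<le> x + y" for z
  proof -
    have q: "0 \<le> z/(x+y)" "z/(x+y) \<le> 1" using that s by auto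
    have "(z/(x+y)) powr a \<le> (z/(x+y)) powr 1"
      using q assms(3) by (intro powr_mono') auto
    then have "(z/(x+y)) powr a \<le> z/(x+y)" using q powr_one_gt_zero_iff
      by (metis powr_one)
    moreover have "z powr a = (x+y) powr a * (z/(x+y)) powr a"
      using s that by (simp add: powr_divide)
    ultimately show ?thesis
      by (metis mult_left_mono powr_ge_zero)
  qed
  have "x powr a + y powr a \<le> (x+y) powr a * (x/(x+y)) + (x+y) powr a * (y/(x+y))"
    using h[of x] h[of y] assms by (intro add_mono) auto
  also have "\<dots> = (x+y) powr a * (x/(x+y) + y/(x+y))" by (simp only: distrib_left)
  also have "x/(x+y) + y/(x+y) = 1" using s by (simp add: add_divide_distrib[symmetric])
  finally show ?thesis by simp
qed

lemma key_powr:
  fixes m c t a :: real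
  assumes "0 \<le> m" "m \<le> c" "0 \<le> t" "1 \<le> a"
  shows "(m + t) powr a - m powr a \<le> (c + t) powr a - c powr a"
proof (cases "m = 0")
  case True
  then show ?thesis using superadd_powr[of c t a] assms by (simp add: add.commute)
next
  case False
  then have m: "m > 0" using assms by auto
  show ?thesis
  proof (cases "c + t = m")
    case True
    then have "t = 0" "c = m" using assms by auto
    then show ?thesis by simp
  next
    case False
    then have dpos: "c + t - m > 0" using assms by auto
    have cv: "convex_on {m..c+t} (\<lambda>x. x powr a)"
      by (rule convex_on_subset[OF powr_convex[OF assms(4)]]) (use m in auto)
    have 1: "(m+t) powr a \<le> ((c+t) powr a - m powr a) / (c + t - m) * ((m+t) - m) + m powr a"
      using convex_onD_Icc'[OF cv, of "m+t"] assms by auto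
    have 2: "c powr a \<le> ((c+t) powr a - m powr a) / (c + t - m) * (c - m) + m powr a"
      using convex_onD_Icc'[OF cv, of "c"] assms by auto
    have "((c+t) powr a - m powr a) / (c + t - m) * ((m+t) - m) +
          ((c+t) powr a - m powr a) / (c + t - m) * (c - m)
          = ((c+t) powr a - m powr a) / (c + t - m) * (c + t - m)"
      by (simp only: distrib_left[symmetric]) (simp add: algebra_simps)
    also have "\<dots> = (c+t) powr a - m powr a" using dpos by simp
    finally show ?thesis using 1 2 by linarith
  qed
qed

lemma telescope:
  fixes x :: "nat \<Rightarrow> real" and m a :: real
  assumes "finite A" "\<forall>i\<in>A. m \<le> x i" "0 \<le> m" "1 \<le> a"
  shows "m \<le> c \<Longrightarrow> (\<Sum>i\<in>A. x i powr a - m powr a) \<le> (c + (\<Sum>i\<in>A. x i - m)) powr a - c powr a"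
  using assms
proof (induction A arbitrary: c rule: finite_induct)
  case empty then show ?case by simp
next
  case (insert b A)
  have k: "x b powr a - m powr a \<le> (c + (x b - m)) powr a - c powr a"
    using key_powr[of m c "x b - m" a] insert by auto
  have ih: "(\<Sum>i\<in>A. x i powr a - m powr a) \<le> ((c + (x b - m)) + (\<Sum>i\<in>A. x i - m)) powr a - (c + (x b - m)) powr a"
    using insert by (intro insert.IH) auto
  show ?case using k ih insert by (simp add: algebra_simps)
qed

lemma numeric:
  fixes x :: "nat \<Rightarrow> real" and m a :: real and d k :: nat
  assumes "1 \<le> a" "real d powr a = real k" "1 \<le> d" "d \<le> k"
    "\<forall>i\<in>{1..d}. m \<le> x i" "0 \<le> m"
  shows "(\<Sum>i\<in>{1..d}. x i powr a) + real (k - d) * m powr a \<le> (\<Sum>i\<in>{1..d}. x i) powr a"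
proof -
  have "(\<Sum>i\<in>{1..d}. x i powr a - m powr a) \<le> (real d * m + (\<Sum>i\<in>{1..d}. x i - m)) powr a - (real d * m) powr a"
  proof (rule telescope)
    have "1 * m \<le> real d * m" using assms by (intro mult_right_mono) auto
    then show "m \<le> real d * m" by simp
  qed (use assms in auto)
  moreover have "(real d * m) powr a = real k * m powr a"
    using assms by (simp add: powr_mult)
  moreover have "(\<Sum>i\<in>{1..d}. x i - m) = (\<Sum>i\<in>{1..d}. x i) - real d * m"
    by (simp add: sum_subtractf)
  moreover have "(\<Sum>i\<in>{1..d}. x i powr a - m powr a) = (\<Sum>i\<in>{1..d}. x i powr a) - real d * m powr a"
    by (simp add: sum_subtractf)
  ultimately show ?thesis using assms by (simp add: of_nat_diff algebra_simps)
qed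

lemma slice_bij:
  assumes "p \<notin> I" "H \<subseteq> PiE (insert p I) (\<lambda>_. S)"
  shows "bij_betw (\<lambda>g. (g p, restrict g I)) H
           (Sigma S (\<lambda>a. {h \<in> PiE I (\<lambda>_. S). h(p:=a) \<in> H}))"
proof (rule bij_betw_byWitness[where f' = "\<lambda>(a,h). h(p:=a)"])
  have r: "(restrict g I)(p := g p) = g" if "g \<in> H" for g
  proof
    fix x show "((restrict g I)(p := g p)) x = g x"
      using that assms by (cases "x = p") (auto simp: PiE_iff extensional_def)
  qed
  show "\<forall>a\<in>H. (case (a p, restrict a I) of (a, h) \<Rightarrow> h(p := a)) = a" using r by auto
  show "\<forall>a'\<in>Sigma S (\<lambda>a. {h \<in> PiE I (\<lambda>_. S). h(p:=a) \<in> H}).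
          ((case a' of (a, h) \<Rightarrow> h(p := a)) p, restrict (case a' of (a, h) \<Rightarrow> h(p := a)) I) = a'"
    using assms(1) by (auto simp: PiE_iff extensional_def restrict_def fun_eq_iff)
  show "(\<lambda>g. (g p, restrict g I)) ` H \<subseteq> Sigma S (\<lambda>a. {h \<in> PiE I (\<lambda>_. S). h(p:=a) \<in> H})"
    using r assms by (auto simp: PiE_iff)
  show "(\<lambda>(a, h). h(p := a)) ` Sigma S (\<lambda>a. {h \<in> PiE I (\<lambda>_. S). h(p:=a) \<in> H}) \<subseteq> H"
    by auto
qed

lemma main:
  fixes d k :: nat and a :: real
  assumes a1: "1 \<le> a" and dk: "real d powr a = real k" and d1: "1 \<le> d" and dle: "d \<le> k"
  shows "finite I \<Longrightarrow> G \<subseteq> PiE I (\<lambda>_. {1..k}) \<Longrightarrow>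
    (\<forall>g p j. g \<in> G \<longrightarrow> p \<in> I \<longrightarrow> d < g p \<longrightarrow> j \<in> {1..k} \<longrightarrow> g(p:=j) \<in> G) \<Longrightarrow>
    real (card G) \<le> real (card (G \<inter> PiE I (\<lambda>_. {1..d}))) powr a"
proof (induction I arbitrary: G rule: finite_induct)
  case empty
  then have "G \<subseteq> {\<lambda>_. undefined}" by simp
  then have "G = {} \<or> G = {\<lambda>_. undefined}" by blast
  then show ?case by auto
next
  case (insert p I)
  define Ga where "Ga b = {h \<in> PiE I (\<lambda>_. {1..k}). h(p:=b) \<in> G}" for b
  define x where "x b = real (card (Ga b \<inter> PiE I (\<lambda>_. {1..d})))" for b
  have finI: "finite (PiE I (\<lambda>_. {1..k::nat}))" using insert by (intro finite_PiE) auto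
  have finGa: "finite (Ga b)" for b using finI unfolding Ga_def by auto
  have c1: "card G = (\<Sum>b\<in>{1..k}. card (Ga b))"
  proof -
    have "card G = card (Sigma {1..k} Ga)"
      using bij_betw_same_card[OF slice_bij[OF insert(2) insert(4)]] unfolding Ga_def by simp
    also have "\<dots> = (\<Sum>b\<in>{1..k}. card (Ga b))" using finGa by (simp add: card_SigmaI)
    finally show ?thesis .
  qed
  have sl: "{h \<in> PiE I (\<lambda>_. {1..d}). h(p:=b) \<in> G \<inter> PiE (insert p I) (\<lambda>_. {1..d})}
            = Ga b \<inter> PiE I (\<lambda>_. {1..d})" if "b \<in> {1..d}" for b
    using that dle insert(2) unfolding Ga_def by (auto simp: PiE_iff extensional_def)
  have c2: "card (G \<inter> PiE (insert p I) (\<lambda>_. {1..d})) = (\<Sum>b\<in>{1..d}. card (Ga b \<inter> PiE I (\<lambda>_. {1..d})))"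
  proof -
    have "card (G \<inter> PiE (insert p I) (\<lambda>_. {1..d})) =
        card (Sigma {1..d} (\<lambda>b. {h \<in> PiE I (\<lambda>_. {1..d}). h(p:=b) \<in> G \<inter> PiE (insert p I) (\<lambda>_. {1..d})}))"
      by (rule bij_betw_same_card[OF slice_bij[OF insert(2)]]) auto
    also have "\<dots> = card (Sigma {1..d} (\<lambda>b. Ga b \<inter> PiE I (\<lambda>_. {1..d})))"
      using sl by (intro arg_cong[where f=card] Sigma_cong) auto
    also have "\<dots> = (\<Sum>b\<in>{1..d}. card (Ga b \<inter> PiE I (\<lambda>_. {1..d})))"
      using finGa by (simp add: card_SigmaI)
    finally show ?thesis .
  qed
  have ih: "real (card (Ga b)) \<le> x b powr a" for b
    unfolding x_def
  proof (rule insert.IH)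
    show "Ga b \<subseteq> PiE I (\<lambda>_. {1..k})" unfolding Ga_def by auto
    show "\<forall>g q j. g \<in> Ga b \<longrightarrow> q \<in> I \<longrightarrow> d < g q \<longrightarrow> j \<in> {1..k} \<longrightarrow> g(q:=j) \<in> Ga b"
    proof (intro allI impI)
      fix g q j assume h: "g \<in> Ga b" "q \<in> I" "d < g q" "j \<in> {1..k}"
      then have qp: "q \<noteq> p" using insert(2) by auto
      have gG: "g(p:=b) \<in> G" using h(1) unfolding Ga_def by auto
      have "(g(p:=b))(q:=j) \<in> G"
      proof -
        have "(g(p:=b)) q = g q" using qp by simp
        then show ?thesis using insert(5)[rule_format, of "g(p:=b)" q j] gG h by simp
      qed
      moreover have "(g(p:=b))(q:=j) = (g(q:=j))(p:=b)" using qp by (simp add: fun_upd_twist)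
      ultimately show "g(q:=j) \<in> Ga b" using h unfolding Ga_def by (auto simp: PiE_iff extensional_def)
    qed
  qed
  have sub: "Ga b \<subseteq> Ga c" if "d < b" "c \<in> {1..k}" for b c
  proof
    fix h assume "h \<in> Ga b"
    then have "h(p:=b) \<in> G" "h \<in> PiE I (\<lambda>_. {1..k})" unfolding Ga_def by auto
    then have "(h(p:=b))(p:=c) \<in> G" using insert(5)[rule_format, of "h(p:=b)" p c] that by simp
    then show "h \<in> Ga c" using \<open>h \<in> PiE I (\<lambda>_. {1..k})\<close> unfolding Ga_def by auto
  qed
  define m where "m = (if d < k then x (d+1) else 0)"
  have m0: "0 \<le> m" unfolding m_def x_def by auto
  have mle: "\<forall>b\<in>{1..d}. m \<le> x b"
  proof
    fix b assume b: "b \<in> {1..d}"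
    show "m \<le> x b"
    proof (cases "d < k")
      case True
      then have "Ga (d+1) \<inter> PiE I (\<lambda>_. {1..d}) \<subseteq> Ga b \<inter> PiE I (\<lambda>_. {1..d})"
        using sub[of "d+1" b] b by auto
      then show ?thesis unfolding m_def x_def using True finGa[of b] by (auto intro: card_mono)
    qed (auto simp: m_def x_def)
  qed
  have high: "real (card (Ga b)) \<le> m powr a" if "b \<in> {d<..k}" for b
  proof -
    have dk': "d < k" using that by auto
    have "card (Ga b) \<le> card (Ga (d+1))"
      using sub[of b "d+1"] that dk' finGa by (intro card_mono) auto
    then show ?thesis using ih[of "d+1"] dk' unfolding m_def by simp
  qed
  have split: "{1..k} = {1..d} \<union> {d<..k}" using d1 dle by auto
  have "real (card G) = (\<Sum>b\<in>{1..d}. real (card (Ga b))) + (\<Sum>b\<in>{d<..k}. real (card (Ga b)))"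
    unfolding c1 of_nat_sum split by (rule sum.union_disjoint) auto
  also have "\<dots> \<le> (\<Sum>b\<in>{1..d}. x b powr a) + (\<Sum>b\<in>{d<..k}. m powr a)"
    using ih high by (intro add_mono sum_mono) auto
  also have "\<dots> = (\<Sum>b\<in>{1..d}. x b powr a) + real (k - d) * m powr a" by simp
  also have "\<dots> \<le> (\<Sum>b\<in>{1..d}. x b) powr a"
    by (rule numeric[OF a1 dk d1 dle mle m0])
  also have "(\<Sum>b\<in>{1..d}. x b) = real (card (G \<inter> PiE (insert p I) (\<lambda>_. {1..d})))"
    unfolding c2 x_def by simp
  finally show ?case .
qed

theorem lemma11:
  fixes d k n :: nat and G :: "(nat \<Rightarrow> nat) set"
  assumes "2 \<le> d" and "d \<le> k" and "1 \<le> n"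
    and "G \<subseteq> words k n"
    and closed: "\<And>g p j. g \<in> G \<Longrightarrow> p < n \<Longrightarrow> g p > d \<Longrightarrow> j \<in> {1..k} \<Longrightarrow> g(p := j) \<in> G"
  shows "(card G = 0 \<and> card (G \<inter> words d n) = 0) \<or>
         (card (G \<inter> words d n) > 0 \<and>
          log (real k) (real (card G)) \<le> log (real d) (real (card (G \<inter> words d n))))"
proof -
  define a where "a = ln (real k) / ln (real d)"
  have lnd: "ln (real d) > 0" using assms by simp
  have lnk: "ln (real d) \<le> ln (real k)" using assms by simp
  have a1: "1 \<le> a" unfolding a_def using lnd lnk by simp
  have dk: "real d powr a = real k"
    unfolding a_def powr_def using assms lnd by simp
  have finG: "finite G" using assms(4) unfolding words_def
    by (rule finite_subset) (intro finite_PiE, auto)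
  have M: "real (card G) \<le> real (card (G \<inter> words d n)) powr a"
    unfolding words_def
    by (rule main[OF a1 dk _ assms(2)]) (use assms in \<open>auto simp: words_def\<close>)
  show ?thesis
  proof (cases "card G = 0")
    case True
    then have "G = {}" using finG by simp
    then show ?thesis by simp
  next
    case False
    have a0: "a > 0" using a1 by simp
    have pos: "card (G \<inter> words d n) > 0"
    proof (rule ccontr)
      assume "\<not> ?thesis"
      then have "card (G \<inter> words d n) = 0" by simp
      then show False using M False a0 by simp
    qed
    have "log (real k) (real (card G)) = ln (real (card G)) / ln (real k)"
      by (simp add: log_def)
    also have "\<dots> \<le> ln (real (card (G \<inter> words d n)) powr a) / ln (real k)"
    proof (rule divide_right_mono)
      show "ln (real (card G)) \<le> ln (real (card (G \<inter> words d n)) powr a)"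
        using M False pos by (subst ln_le_cancel_iff) auto
    qed (use lnd lnk in auto)
    also have "\<dots> = a * ln (real (card (G \<inter> words d n))) / ln (real k)"
      using pos by (simp add: ln_powr)
    also have "\<dots> = log (real d) (real (card (G \<inter> words d n)))"
      unfolding a_def log_def using lnd lnk by (simp add: field_simps)
    finally show ?thesis using pos by simp
  qed
qed

end
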